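(* Let $n\ge 1$. (a) For every goal pattern $G$ (a multiset of $n$ points of $\mathbb R^2$) there is an algorithm of size $n$ that solves the pattern formation problem for $G$ under the SSYNC scheduler. (b) For $n\ge3$, if $G$ is the set of vertices of a regular $n$-gon, then no algorithm of size less than $n$ solves the pattern formation problem for $G$. Hence the MAS of the pattern formation problem is $n$.
   Context: Model. A swarm consists of $n\ge1$ robots $r_1,\dots,r_n$, modeled as points in $\mathbb R^2$. Each robot $r_i$ has a local right-handed $x$-$y$ coordinate system $Z_i$ whose origin is always the robot's current position, with arbitrary (adversarially chosen, fixed) unit length and axis orientation; robots do not share coordinate systems. The configuration at time $t$ is the multiset $P_t$ of the $n$ robot positions (robots can detect multiplicities). A target function $\phi$ maps each finite multiset $P$ of points of $\mathbb R^2$ with $(0,0)\in P$ to a point $\phi(P)\in\mathbb R^2$. Time is discrete, $t=0,1,2,\dots$. Under the semi-synchronous (SSYNC) scheduler, at each time $t$ an adversary chooses a set of robots to activate; each activated robot $r_i$ observes $P_t$ expressed in $Z_i$, evaluates its target function on this multiset, and moves to the resulting point (interpreted in $Z_i$), arriving before time $t+1$; non-activated robots do not move. Schedules are fair: every robot is activated infinitely often. An algorithm of size $m$ is a set $\Phi$ of $m$ distinct target functions ($m\le n$); an assignment is a surjection $\mathcal A$ from the robots onto $\Phi$, robot $r_i$ using $\mathcal A(r_i)$. $\Phi$ solves a problem if for every assignment, every choice of local coordinate systems, every initial configuration and every fair SSYNC schedule, the resulting execution solves the problem. The MAS of a problem is the least $m$ such that some algorithm of size $m$ solves it, and $\infty$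 if no algorithm of any size $m\le n$ solves it. Problem. Two multisets are similar if one is obtained from the other by a composition of a positive scaling, a translation and a rotation (no reflection). The pattern formation problem for a goal pattern $G$: starting from any initial configuration, reach a configuration similar to $G$. *)

theory Defs
  imports Complex_Main "HOL-Library.Multiset"
begin

text \<open>Points of the plane are complex numbers. A target function maps a multiset of
points (observed in local coordinates, containing the origin) to a point.\<close>

type_synonym target_fun = "complex multiset \<Rightarrow> complex"

definition config :: "nat \<Rightarrow> (nat \<Rightarrow> complex) \<Rightarrow> complex multiset" where
  "config n p = mset (map p [0..<n])"

text \<open>Local coordinate system of robot i: origin at its current position, and a fixed
right-handed frame given by a nonzero complex number c i (rotation + positive scaling):
local point z corresponds to global point  p i + c i * z.\<close>

definition observe :: "nat \<Rightarrow> (nat \<Rightarrow> complex) \<Rightarrow> complex \<Rightarrow> nat \<Rightarrow> complex multiset" where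
  "observe n p ci i = image_mset (\<lambda>q. (q - p i) / ci) (config n p)"

text \<open>SSYNC execution: A = assignment, c = local frames, p0 = initial positions,
S t = set of robots activated at time t.\<close>

fun exec :: "nat \<Rightarrow> (nat \<Rightarrow> target_fun) \<Rightarrow> (nat \<Rightarrow> complex) \<Rightarrow> (nat \<Rightarrow> complex)
    \<Rightarrow> (nat \<Rightarrow> nat set) \<Rightarrow> nat \<Rightarrow> (nat \<Rightarrow> complex)" where
  "exec n A c p0 S 0 = p0"
| "exec n A c p0 S (Suc t) =
     (let p = exec n A c p0 S t in
      (\<lambda>i. if i \<in> S t then p i + c i * A i (observe n p (c i) i) else p i))"

definition fair :: "nat \<Rightarrow> (nat \<Rightarrow> nat set) \<Rightarrow> bool" where
  "fair n S \<longleftrightarrow> (\<forall>t. S t \<subseteq> {..<n}) \<and> (\<forall>i<n. \<forall>t. \<exists>t'\<ge>t. i \<in> S t')"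

definition similar :: "complex multiset \<Rightarrow> complex multiset \<Rightarrow> bool" where
  "similar P Q \<longleftrightarrow> (\<exists>a b. a \<noteq> 0 \<and> P = image_mset (\<lambda>z. a * z + b) Q)"

definition algorithm :: "nat \<Rightarrow> target_fun set \<Rightarrow> bool" where
  "algorithm n Phi \<longleftrightarrow> finite Phi \<and> Phi \<noteq> {} \<and> card Phi \<le> n"

definition assignment :: "nat \<Rightarrow> target_fun set \<Rightarrow> (nat \<Rightarrow> target_fun) \<Rightarrow> bool" where
  "assignment n Phi A \<longleftrightarrow> A ` {..<n} = Phi"

definition solves_pf :: "nat \<Rightarrow> complex multiset \<Rightarrow> target_fun set \<Rightarrow> bool" where
  "solves_pf n G Phi \<longleftrightarrow>
     (\<forall>A c p0 S. assignment n Phi A \<longrightarrow> (\<forall>i<n. c i \<noteq> 0) \<longrightarrow> fair n S \<longrightarrow>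
        (\<exists>t. similar (config n (exec n A c p0 S t)) G))"

definition regular_polygon :: "nat \<Rightarrow> complex multiset" where
  "regular_polygon n = mset (map (\<lambda>k. cis (2 * pi * real k / real n)) [0..<n])"

definition is_regular_ngon :: "nat \<Rightarrow> complex multiset \<Rightarrow> bool" where
  "is_regular_ngon n G \<longleftrightarrow> (\<exists>a b. a \<noteq> 0 \<and> G = image_mset (\<lambda>z. a * z + b) (regular_polygon n))"

end

theory Submission
  imports Defs
begin

lemma exec_same:
  assumes "A i = A k" "c i = c k" "p0 i = p0 k" "\<forall>t. i \<in> S t \<longleftrightarrow> k \<in> S t"
  shows "exec n A c p0 S t i = exec n A c p0 S t k"
  using assms by (induction t) (auto simp: Let_def observe_def)

lemma regpoly_count:
  assumes "n > 0" "a \<noteq> 0"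
  shows "count (image_mset (\<lambda>z. a * z + b) (regular_polygon n)) y \<le> 1"
proof -
  have inj: "inj_on (\<lambda>k. cis (2 * pi * real k / real n)) {..<n}"
    using bij_betw_roots_unity[OF assms(1)] by (simp add: bij_betw_def)
  have inj2: "inj (\<lambda>z. a * z + b)" using assms(2) by (auto simp: inj_def)
  have d: "distinct (map (\<lambda>k. cis (2 * pi * real k / real n)) [0..<n])"
    using inj by (simp add: distinct_map lessThan_atLeast0)
  have "distinct (map (\<lambda>z. a * z + b) (map (\<lambda>k. cis (2 * pi * real k / real n)) [0..<n]))"
    using d inj2 by (simp add: distinct_map inj_on_def del: map_map)
  thus ?thesis unfolding regular_polygon_def
    by (metis distinct_count_atmost_1 mset_map nle_le not_one_le_zero zero_le_one)
qed

lemma partB: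
  assumes n3: "n \<ge> 3" and G: "is_regular_ngon n G" and alg: "algorithm n Phi" and cp: "card Phi < n"
  shows "\<not> solves_pf n G Phi"
proof
  assume sol: "solves_pf n G Phi"
  from alg have fin: "finite Phi" and ne: "Phi \<noteq> {}" by (auto simp: algorithm_def)
  obtain ps where ps: "set ps = Phi" "distinct ps" using finite_distinct_list[OF fin] by blast
  define k where "k = length ps"
  have k: "k = card Phi" using ps distinct_card k_def by metis
  have k1: "k \<ge> 1" using ne ps k_def by (cases ps) auto
  have kn: "k < n" using k cp by simp
  define A where "A = (\<lambda>i. if i < k then ps ! i else ps ! 0)"
  have asg: "assignment n Phi A"
  proof -
    have "A ` {..<n} = set ps"
    proof
      show "A ` {..<n} \<subseteq> set ps" using k1 by (auto simp: A_def k_def intro: nth_mem)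
      show "set ps \<subseteq> A ` {..<n}"
      proof
        fix x assume "x \<in> set ps"
        then obtain i where "i < k" "ps ! i = x" by (auto simp: in_set_conv_nth k_def)
        thus "x \<in> A ` {..<n}" using kn by (auto simp: A_def intro!: image_eqI[of _ _ i])
      qed
    qed
    thus ?thesis using ps by (simp add: assignment_def)
  qed
  define S :: "nat \<Rightarrow> nat set" where "S = (\<lambda>t. {..<n})"
  have fair: "fair n S" by (auto simp: fair_def S_def)
  define p0 :: "nat \<Rightarrow> complex" where "p0 = (\<lambda>_. 0)"
  define c :: "nat \<Rightarrow> complex" where "c = (\<lambda>_. 1)"
  obtain t where sim: "similar (config n (exec n A c p0 S t)) G"
    using sol asg fair unfolding solves_pf_def c_def by fastforce
  let ?p = "exec n A c p0 S t"
  have eq: "?p 0 = ?p k"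
    by (rule exec_same) (use kn k1 in \<open>auto simp: A_def c_def p0_def S_def\<close>)
  from G obtain a b where ab: "a \<noteq> 0" "G = image_mset (\<lambda>z. a * z + b) (regular_polygon n)"
    by (auto simp: is_regular_ngon_def)
  from sim obtain a' b' where ab': "a' \<noteq> 0" "config n ?p = image_mset (\<lambda>z. a' * z + b') G"
    by (auto simp: similar_def)
  have "config n ?p = image_mset (\<lambda>z. (a'*a) * z + (a'*b+b')) (regular_polygon n)"
    using ab ab' by (simp add: image_mset.compositionality o_def algebra_simps)
  hence le1: "count (config n ?p) (?p 0) \<le> 1"
    using regpoly_count[of n "a'*a" "a'*b+b'"] ab ab' n3 by simp
  have "{#?p 0, ?p k#} \<subseteq># config n ?p"
  proof -
    have "mset [0,k] \<subseteq># mset [0..<n]"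
    proof (rule subset_mset.order_trans[of _ "mset_set {0,k}"])
      show "mset [0,k] \<subseteq># mset_set {0,k}" using k1 by simp
      have "mset [0..<n] = mset_set {0..<n}" by (simp add: mset_set_set)
      moreover have "mset_set {0,k} \<subseteq># mset_set {0..<n}"
        using kn by (intro subset_imp_msubset_mset_set) auto
      ultimately show "mset_set {0,k} \<subseteq># mset [0..<n]" by simp
    qed
    hence "image_mset ?p (mset [0,k]) \<subseteq># image_mset ?p (mset [0..<n])"
      by (rule image_mset_subseteq_mono)
    thus ?thesis by (simp add: config_def)
  qed
  hence "count {#?p 0, ?p k#} (?p 0) \<le> count (config n ?p) (?p 0)" by (rule mset_subset_eq_count)
  with eq le1 show False by simp
qed

lemma count_mset_map_upt:
  "count (mset (map f [0..<n])) b = card {i. i < n \<and> f i = b}"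
proof (induction n)
  case 0 then show ?case by simp
next
  case (Suc n)
  have "{i. i < Suc n \<and> f i = b} = {i. i < n \<and> f i = b} \<union> (if f n = b then {n} else {})"
    by (auto simp: less_Suc_eq)
  moreover have "finite {i. i < n \<and> f i = b}" by simp
  ultimately have "card {i. i < Suc n \<and> f i = b} = card {i. i < n \<and> f i = b} + (if f n = b then 1 else 0)"
    by (auto simp: card_insert_if)
  with Suc show ?case by simp
qed

lemma count_config: "count (config n p) b = card {i. i < n \<and> p i = b}"
  unfolding config_def by (rule count_mset_map_upt)

lemma mset_map_upt_update:
  assumes "r < n"
  shows "mset (map (f(r := y)) [0..<n]) = mset (map f [0..<n]) - {#f r#} + {#y#}"
proof -
  have u0: "[0..<n] = [0..<r] @ [r..<n]" using upt_add_eq_append[of 0 r "n - r"] assms by simp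
  have u: "[0..<n] = [0..<r] @ r # [Suc r..<n]" using u0 assms by (simp add: upt_conv_Cons)
  have e1: "map (f(r := y)) [0..<r] = map f [0..<r]" by simp
  have e2: "map (f(r := y)) [Suc r..<n] = map f [Suc r..<n]" by simp
  show ?thesis by (subst (1 2) u) (simp add: e1 e2)
qed

lemma config_cong: "(\<And>i. i < n \<Longrightarrow> p i = q i) \<Longrightarrow> config n p = config n q"
  unfolding config_def by (intro arg_cong[where f=mset] map_cong) auto

definition umax :: "complex multiset \<Rightarrow> complex \<Rightarrow> bool" where
  "umax P a \<longleftrightarrow> a \<in># P \<and> (\<forall>b. b \<noteq> a \<longrightarrow> count P b < count P a)"

lemma umax_unique: "umax P a \<Longrightarrow> umax P b \<Longrightarrow> a = b"
  unfolding umax_def by (metis order.asym)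

lemma umax_the: "umax P a \<Longrightarrow> (THE a. umax P a) = a"
  using umax_unique by blast

lemma count_image_inj:
  assumes "inj f" shows "count (image_mset f P) (f b) = count P b"
proof -
  have "f -` {f b} = {b}" using assms by (auto dest: injD)
  thus ?thesis by (cases "b \<in># P") (auto simp: count_image_mset not_in_iff)
qed

locale pfalg =
  fixes n :: nat and m :: nat and z :: "nat \<Rightarrow> complex"
  assumes m1: "1 \<le> m" and mn: "m \<le> n"
    and z0: "z 0 = 0"
    and znz: "\<And>i. 1 \<le> i \<Longrightarrow> i < m \<Longrightarrow> z i \<noteq> 0"
    and zz: "\<And>i. m \<le> i \<Longrightarrow> z i = 0"
    and zmult: "\<And>\<zeta>. \<zeta> \<noteq> 0 \<Longrightarrow> card {i. i < n \<and> z i = \<zeta>} \<le> n - m + 1"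
begin

definition gk :: "nat \<Rightarrow> complex \<Rightarrow> complex \<Rightarrow> nat \<Rightarrow> complex" where
  "gk k a w i = (if 1 \<le> i \<and> i < k then a + w * z i else a)"

definition Mk :: "nat \<Rightarrow> complex \<Rightarrow> complex \<Rightarrow> complex multiset" where
  "Mk k a w = mset (map (gk k a w) [0..<n])"

definition stageP :: "complex multiset \<Rightarrow> complex \<Rightarrow> bool" where
  "stageP P a \<longleftrightarrow> (\<exists>w. w \<noteq> 0 \<and> P = Mk (n - count P a + 1) a w)"

definition final :: "complex multiset \<Rightarrow> bool" where
  "final P \<longleftrightarrow> (\<exists>a w. w \<noteq> 0 \<and> P = Mk m a w)"

definition fj :: "nat \<Rightarrow> complex multiset \<Rightarrow> complex" where
  "fj j Q = (if Q = {#} then of_nat j else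
     if (\<exists>\<alpha>. umax Q \<alpha>) then
       (let \<alpha> = (THE \<alpha>. umax Q \<alpha>); k = n - count Q \<alpha> in
        if stageP Q \<alpha> then
          (if \<alpha> = 0 \<and> j = k + 1 then \<alpha> + (SOME w. w \<noteq> 0 \<and> Q = Mk (k+1) \<alpha> w) * z j
           else if \<alpha> \<noteq> 0 \<and> \<not> (1 \<le> j \<and> j \<le> k) then \<alpha> else 0)
        else \<alpha>)
     else if j = 1 then (SOME y. y \<noteq> 0 \<and> (\<forall>b. count Q b \<le> count Q y)) else 0)"

definition spec :: "nat \<Rightarrow> complex multiset \<Rightarrow> complex \<Rightarrow> complex \<Rightarrow> bool" where
  "spec j P x y \<longleftrightarrow> (if (\<exists>a. umax P a) then
     (let a = (THE a. umax P a); k = n - count P a in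
      if stageP P a then
        (if x = a \<and> j = k + 1 then (\<exists>w. w \<noteq> 0 \<and> P = Mk (k+1) a w \<and> y = a + w * z j)
         else if x \<noteq> a \<and> \<not> (1 \<le> j \<and> j \<le> k) then y = a else y = x)
      else y = a)
   else (if j = 1 then y \<noteq> x \<and> (\<forall>b. count P b \<le> count P y) else y = x))"

lemma n1: "1 \<le> n" using m1 mn by simp

lemma count_Mk: "count (Mk k a w) b = card {i. i < n \<and> gk k a w i = b}"
  unfolding Mk_def by (rule count_mset_map_upt)

lemma Mk_cntA:
  assumes "1 \<le> k" "k \<le> m" "w \<noteq> 0"
  shows "count (Mk k a w) a = n - k + 1"
proof -
  have "{i. i < n \<and> gk k a w i = a} = insert 0 {k..<n}"
    using assms n1 znz by (auto simp: gk_def)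
  moreover have "0 \<notin> {k..<n}" using assms by simp
  ultimately have "card {i. i < n \<and> gk k a w i = a} = Suc (n - k)" by simp
  thus ?thesis using assms mn by (simp add: count_Mk)
qed

lemma Mk_cntB:
  assumes "b \<noteq> a" "w \<noteq> 0"
  shows "count (Mk k a w) b \<le> n - m + 1"
proof -
  have "{i. i < n \<and> gk k a w i = b} \<subseteq> {i. i < n \<and> z i = (b - a) / w}"
    using assms by (auto simp: gk_def field_simps split: if_splits)
  hence "card {i. i < n \<and> gk k a w i = b} \<le> card {i. i < n \<and> z i = (b - a) / w}"
    by (intro card_mono) auto
  also have "\<dots> \<le> n - m + 1" using assms by (intro zmult) auto
  finally show ?thesis by (simp add: count_Mk)
qed

lemma Mk_ge: "m \<le> k \<Longrightarrow> Mk k a w = Mk m a w"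
  unfolding Mk_def by (intro arg_cong[where f=mset] map_cong) (auto simp: gk_def zz)

lemma Mk_update:
  assumes "k < n"
  shows "Mk (Suc k) a w = Mk k a w - {#a#} + {#a + w * z k#}"
proof -
  have "gk (Suc k) a w = (gk k a w)(k := a + w * z k)"
    by (cases "k = 0") (auto simp: gk_def fun_eq_iff z0 less_Suc_eq)
  moreover have "gk k a w k = a" by (simp add: gk_def)
  ultimately show ?thesis using mset_map_upt_update[OF assms, of "gk k a w"] by (simp add: Mk_def)
qed

lemma Mk_image:
  "image_mset (\<lambda>u. x + c * u) (Mk k a w) = Mk k (x + c * a) (c * w)"
  unfolding Mk_def mset_map[symmetric] map_map
  by (intro arg_cong[where f=mset] map_cong) (auto simp: gk_def algebra_simps)

lemma view_back:
  fixes c x :: complex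
  assumes "c \<noteq> 0"
  shows "image_mset (\<lambda>u. x + c * u) (image_mset (\<lambda>q. (q - x) / c) P) = P"
proof -
  have "(\<lambda>u. x + c * u) \<circ> (\<lambda>q. (q - x) / c) = id" using assms by (auto simp: fun_eq_iff field_simps)
  thus ?thesis by (simp add: image_mset.compositionality)
qed

lemma view_fwd:
  fixes c x :: complex
  assumes "c \<noteq> 0"
  shows "image_mset (\<lambda>q. (q - x) / c) (image_mset (\<lambda>u. x + c * u) P) = P"
proof -
  have "(\<lambda>q. (q - x) / c) \<circ> (\<lambda>u. x + c * u) = id" using assms by (auto simp: fun_eq_iff field_simps)
  thus ?thesis by (simp add: image_mset.compositionality)
qed

lemma inj_T: "(c::complex) \<noteq> 0 \<Longrightarrow> inj (\<lambda>q. (q - x) / c)"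
  by (auto simp: inj_def field_simps)

lemma count_view:
  fixes c x :: complex
  assumes "c \<noteq> 0"
  shows "count (image_mset (\<lambda>q. (q - x) / c) P) u = count P (x + c * u)"
proof -
  have "u = (\<lambda>q. (q - x) / c) (x + c * u)" using assms by (simp add: field_simps)
  hence "count (image_mset (\<lambda>q. (q - x) / c) P) u
       = count (image_mset (\<lambda>q. (q - x) / c) P) ((\<lambda>q. (q - x) / c) (x + c * u))" by simp
  also have "\<dots> = count P (x + c * u)" by (rule count_image_inj[OF inj_T[OF assms]])
  finally show ?thesis .
qed

lemma umax_view:
  fixes c x :: complex
  assumes "c \<noteq> 0"
  shows "umax (image_mset (\<lambda>q. (q - x) / c) P) u \<longleftrightarrow> umax P (x + c * u)"
proof -
  let ?Q = "image_mset (\<lambda>q. (q - x) / c) P"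
  have cq: "\<And>v. count ?Q v = count P (x + c * v)" by (rule count_view[OF assms])
  have inv: "\<And>b. b = x + c * ((b - x) / c)" using assms by simp
  show ?thesis
  proof
    assume H: "umax ?Q u"
    show "umax P (x + c * u)" unfolding umax_def
    proof (intro conjI allI impI)
      show "x + c * u \<in># P" using H cq[of u] by (metis umax_def count_greater_zero_iff)
      fix b assume "b \<noteq> x + c * u"
      hence "(b - x) / c \<noteq> u" using assms by auto
      hence "count ?Q ((b - x) / c) < count ?Q u" using H by (simp add: umax_def)
      thus "count P b < count P (x + c * u)" using cq inv by metis
    qed
  next
    assume H: "umax P (x + c * u)"
    show "umax ?Q u" unfolding umax_def
    proof (intro conjI allI impI)
      show "u \<in># ?Q" using H cq[of u] by (metis umax_def count_greater_zero_iff)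
      fix b assume "b \<noteq> u"
      hence "x + c * b \<noteq> x + c * u" using assms by auto
      thus "count ?Q b < count ?Q u" using H cq by (simp add: umax_def)
    qed
  qed
qed

lemma Mk_view:
  fixes c x :: complex
  assumes "c \<noteq> 0"
  shows "image_mset (\<lambda>q. (q - x) / c) P = Mk k u w \<longleftrightarrow> P = Mk k (x + c * u) (c * w)"
proof
  assume "image_mset (\<lambda>q. (q - x) / c) P = Mk k u w"
  hence "image_mset (\<lambda>u. x + c * u) (image_mset (\<lambda>q. (q - x) / c) P) = image_mset (\<lambda>u. x + c * u) (Mk k u w)"
    by simp
  thus "P = Mk k (x + c * u) (c * w)" using view_back[OF assms] Mk_image by simp
next
  assume "P = Mk k (x + c * u) (c * w)"
  hence "P = image_mset (\<lambda>u. x + c * u) (Mk k u w)" using Mk_image by simp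
  thus "image_mset (\<lambda>q. (q - x) / c) P = Mk k u w" using view_fwd[OF assms] by simp
qed

lemma stage_view:
  fixes c x :: complex
  assumes "c \<noteq> 0"
  shows "stageP (image_mset (\<lambda>q. (q - x) / c) P) u \<longleftrightarrow> stageP P (x + c * u)"
proof -
  have cq: "count (image_mset (\<lambda>q. (q - x) / c) P) u = count P (x + c * u)" by (rule count_view[OF assms])
  show ?thesis
  proof
    assume "stageP (image_mset (\<lambda>q. (q - x) / c) P) u"
    then obtain w where "w \<noteq> 0" "image_mset (\<lambda>q. (q - x) / c) P = Mk (n - count P (x + c * u) + 1) u w"
      using cq by (auto simp: stageP_def)
    hence "w \<noteq> 0" "P = Mk (n - count P (x + c * u) + 1) (x + c * u) (c * w)"
      using Mk_view[OF assms] by auto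
    thus "stageP P (x + c * u)" using assms unfolding stageP_def by (intro exI[of _ "c * w"]) simp
  next
    assume "stageP P (x + c * u)"
    then obtain w where w: "w \<noteq> 0" "P = Mk (n - count P (x + c * u) + 1) (x + c * u) w"
      by (auto simp: stageP_def)
    hence "P = Mk (n - count P (x + c * u) + 1) (x + c * u) (c * (w / c))" using assms by simp
    hence "image_mset (\<lambda>q. (q - x) / c) P = Mk (n - count P (x + c * u) + 1) u (w / c)"
      using Mk_view[OF assms] by blast
    thus "stageP (image_mset (\<lambda>q. (q - x) / c) P) u" using cq w assms
      unfolding stageP_def by (intro exI[of _ "w / c"]) simp
  qed
qed

lemma tie_exists:
  assumes "Q \<noteq> {#}" "\<not> (\<exists>a. umax Q a)"
  shows "\<exists>y. y \<noteq> 0 \<and> (\<forall>b. count Q b \<le> count Q y)"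
proof -
  define M where "M = Max (count Q ` set_mset Q)"
  have fin: "finite (count Q ` set_mset Q)" by simp
  have ne: "count Q ` set_mset Q \<noteq> {}" using assms by simp
  obtain y1 where y1: "y1 \<in># Q" "count Q y1 = M" using Max_in[OF fin ne] M_def by auto
  have le: "count Q b \<le> M" for b
  proof (cases "b \<in># Q")
    case True thus ?thesis using Max_ge[OF fin] M_def by auto
  next
    case False thus ?thesis by (simp add: not_in_iff)
  qed
  show ?thesis
  proof (cases "y1 = 0")
    case False thus ?thesis using le y1 by metis
  next
    case True
    from assms(2) y1 obtain b where b: "b \<noteq> y1" "\<not> count Q b < count Q y1" by (auto simp: umax_def)
    hence "count Q b = M" using le y1 by (metis le_antisym not_less)
    thus ?thesis using b True le by metis
  qed
qed


lemma fj_umax: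
  assumes "Q \<noteq> {#}" "umax Q \<alpha>"
  shows "fj j Q = (if stageP Q \<alpha> then
          (if \<alpha> = 0 \<and> j = n - count Q \<alpha> + 1 then \<alpha> + (SOME w. w \<noteq> 0 \<and> Q = Mk (n - count Q \<alpha> + 1) \<alpha> w) * z j
           else if \<alpha> \<noteq> 0 \<and> \<not> (1 \<le> j \<and> j \<le> n - count Q \<alpha>) then \<alpha> else 0)
        else \<alpha>)"
proof -
  have ex: "\<exists>\<alpha>. umax Q \<alpha>" using assms(2) by blast
  show ?thesis unfolding fj_def Let_def using assms(1) ex umax_the[OF assms(2)] by (simp only: if_False if_True)
qed

lemma fj_tie:
  assumes "Q \<noteq> {#}" "\<not> (\<exists>\<alpha>. umax Q \<alpha>)"
  shows "fj j Q = (if j = 1 then (SOME y. y \<noteq> 0 \<and> (\<forall>b. count Q b \<le> count Q y)) else 0)"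
  unfolding fj_def using assms by (simp only: if_False)

lemma spec_umax:
  assumes "umax P a"
  shows "spec j P x y \<longleftrightarrow> (if stageP P a then
        (if x = a \<and> j = n - count P a + 1 then (\<exists>w. w \<noteq> 0 \<and> P = Mk (n - count P a + 1) a w \<and> y = a + w * z j)
         else if x \<noteq> a \<and> \<not> (1 \<le> j \<and> j \<le> n - count P a) then y = a else y = x)
      else y = a)"
proof -
  have ex: "\<exists>a. umax P a" using assms by blast
  show ?thesis unfolding spec_def Let_def using ex umax_the[OF assms] by (simp only: if_True)
qed

lemma spec_tie:
  assumes "\<not> (\<exists>a. umax P a)"
  shows "spec j P x y \<longleftrightarrow> (if j = 1 then y \<noteq> x \<and> (\<forall>b. count P b \<le> count P y) else y = x)"
  unfolding spec_def using assms by (simp only: if_False)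

lemma local_global:
  fixes c x :: complex
  assumes c: "c \<noteq> 0" and ne: "P \<noteq> {#}"
  shows "spec j P x (x + c * fj j (image_mset (\<lambda>q. (q - x) / c) P))"
proof -
  define Q where "Q = image_mset (\<lambda>q. (q - x) / c) P"
  have Qne: "Q \<noteq> {#}" using ne by (simp add: Q_def)
  define T where "T = (\<lambda>q. (q - x) / c)"
  have TiT: "\<And>q. x + c * T q = q" using c by (simp add: T_def field_simps)
  have uv: "\<And>u. umax Q u \<longleftrightarrow> umax P (x + c * u)" unfolding Q_def by (rule umax_view[OF c])
  have cv: "\<And>u. count Q u = count P (x + c * u)" unfolding Q_def by (rule count_view[OF c])
  have sv: "\<And>u. stageP Q u \<longleftrightarrow> stageP P (x + c * u)" unfolding Q_def by (rule stage_view[OF c])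
  have mv: "\<And>k u w. Q = Mk k u w \<longleftrightarrow> P = Mk k (x + c * u) (c * w)" unfolding Q_def by (rule Mk_view[OF c])
  show ?thesis
  proof (cases "\<exists>a. umax P a")
    case True
    then obtain a where a: "umax P a" by blast
    have uQ: "umax Q (T a)" using uv[of "T a"] a TiT by simp
    have cnt: "count Q (T a) = count P a" using cv[of "T a"] TiT by simp
    have stiff: "stageP Q (T a) \<longleftrightarrow> stageP P a" using sv[of "T a"] TiT by simp
    define k where "k = n - count P a"
    have T0: "T a = 0 \<longleftrightarrow> x = a" using c TiT by (metis T_def diff_self div_0 mult_zero_right add_0_right)
    have fjQ: "fj j Q = (if stageP P a then
          (if T a = 0 \<and> j = k + 1 then T a + (SOME w. w \<noteq> 0 \<and> Q = Mk (k + 1) (T a) w) * z j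
           else if T a \<noteq> 0 \<and> \<not> (1 \<le> j \<and> j \<le> k) then T a else 0)
        else T a)"
      using fj_umax[OF Qne uQ, of j] unfolding cnt stiff k_def[symmetric] .
    have sp: "\<And>y. spec j P x y \<longleftrightarrow> (if stageP P a then
        (if x = a \<and> j = k + 1 then (\<exists>w. w \<noteq> 0 \<and> P = Mk (k + 1) a w \<and> y = a + w * z j)
         else if x \<noteq> a \<and> \<not> (1 \<le> j \<and> j \<le> k) then y = a else y = x)
      else y = a)"
      using spec_umax[OF a] unfolding k_def[symmetric] .
    show ?thesis
    proof (cases "stageP P a")
      case st: True
      show ?thesis
      proof (cases "x = a \<and> j = k + 1")
        case True
        define wl where "wl = (SOME w. w \<noteq> 0 \<and> Q = Mk (k+1) (T a) w)"
        have "\<exists>w. w \<noteq> 0 \<and> Q = Mk (k+1) (T a) w" using st stiff cnt by (simp add: stageP_def k_def)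
        hence wl: "wl \<noteq> 0 \<and> Q = Mk (k+1) (T a) wl" unfolding wl_def by (rule someI_ex)
        hence P: "P = Mk (k+1) a (c * wl)" using mv[of "k+1" "T a" wl] TiT by simp
        have fjv: "fj j Q = T a + wl * z j" using fjQ st True T0 by (simp add: wl_def)
        have y: "x + c * fj j Q = a + (c * wl) * z j" using fjv True T0 by (simp add: algebra_simps)
        have "\<exists>w. w \<noteq> 0 \<and> P = Mk (k + 1) a w \<and> a + (c * wl) * z j = a + w * z j"
          using P wl c by (intro exI[of _ "c * wl"]) simp
        hence "spec j P x (a + (c * wl) * z j)" using sp st True by simp
        thus ?thesis using y by (simp add: Q_def)
      next
        case False
        show ?thesis
        proof (cases "x \<noteq> a \<and> \<not> (1 \<le> j \<and> j \<le> k)")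
          case True
          have "fj j Q = T a" using fjQ st True False T0 by simp
          hence "x + c * fj j Q = a" using TiT by simp
          moreover have "spec j P x a" using sp st True False by simp
          ultimately show ?thesis unfolding Q_def[symmetric] by (simp only:)
        next
          case F2: False
          have "fj j Q = 0" using fjQ st F2 False T0 by auto
          hence "x + c * fj j Q = x" by simp
          moreover have "spec j P x x" using sp[of x] st F2 False by (simp only: if_True if_False simp_thms)
          ultimately show ?thesis unfolding Q_def[symmetric] by (simp only:)
        qed
      qed
    next
      case nst: False
      have "fj j Q = T a" using fjQ nst by simp
      hence "x + c * fj j Q = a" using TiT by simp
      moreover have "spec j P x a" using sp nst by simp
      ultimately show ?thesis unfolding Q_def[symmetric] by (simp only:)
    qed
  next
    case False
    have nQ: "\<not> (\<exists>a. umax Q a)" using False uv by blast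
    have sp: "\<And>y. spec j P x y \<longleftrightarrow> (if j = 1 then y \<noteq> x \<and> (\<forall>b. count P b \<le> count P y) else y = x)"
      by (rule spec_tie[OF False])
    show ?thesis
    proof (cases "j = 1")
      case True
      define yl where "yl = (SOME y. y \<noteq> 0 \<and> (\<forall>b. count Q b \<le> count Q y))"
      have yl: "yl \<noteq> 0 \<and> (\<forall>b. count Q b \<le> count Q yl)"
        unfolding yl_def by (rule someI_ex[OF tie_exists[OF Qne nQ]])
      have fjv: "fj j Q = yl" using fj_tie[OF Qne nQ, of j] True by (simp add: yl_def)
      have "\<forall>b. count P b \<le> count P (x + c * yl)"
      proof
        fix b
        have "count P b = count Q (T b)" using cv[of "T b"] TiT by simp
        also have "\<dots> \<le> count Q yl" using yl by simp
        also have "\<dots> = count P (x + c * yl)" using cv by simp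
        finally show "count P b \<le> count P (x + c * yl)" .
      qed
      moreover have "x + c * yl \<noteq> x" using c yl by simp
      ultimately have "spec j P x (x + c * yl)" using sp True by simp
      thus ?thesis using fjv by (simp add: Q_def)
    next
      case F: False
      have "fj j Q = 0" using fj_tie[OF Qne nQ, of j] F by simp
      hence "x + c * fj j Q = x" by simp
      moreover have "spec j P x x" using sp F by simp
      ultimately show ?thesis unfolding Q_def[symmetric] by (simp only:)
    qed
  qed
qed

lemma card_split: "card {i. i < n \<and> p i = a} + card {i. i < n \<and> p i \<noteq> a} = (n::nat)"
proof -
  have "{i. i < n \<and> p i = a} \<union> {i. i < n \<and> p i \<noteq> a} = {..<n}" by auto
  moreover have "{i. i < n \<and> p i = a} \<inter> {i. i < n \<and> p i \<noteq> a} = {}" by auto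
  ultimately show ?thesis using card_Un_disjoint[of "{i. i < n \<and> p i = a}" "{i. i < n \<and> p i \<noteq> a}"]
    by simp
qed

lemma umax_in: "umax P a \<Longrightarrow> 1 \<le> count P a"
  by (simp add: umax_def Suc_le_eq)

lemma step_nonstage:
  assumes u: "umax (config n p) a" and mv: "\<forall>i<n. p' i = p i \<or> p' i = a"
  shows "umax (config n p') a"
proof -
  have sub: "{i. i < n \<and> p i = a} \<subseteq> {i. i < n \<and> p' i = a}" using mv by auto
  have ca: "count (config n p) a \<le> count (config n p') a"
    unfolding count_config by (rule card_mono[OF _ sub]) simp
  have cb: "count (config n p') b \<le> count (config n p) b" if "b \<noteq> a" for b
    unfolding count_config by (rule card_mono) (use mv that in auto)
  show ?thesis unfolding umax_def
  proof (intro conjI allI impI)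
    show "a \<in># config n p'" using ca umax_in[OF u] by (simp flip: count_greater_zero_iff)
    fix b assume "b \<noteq> a"
    hence "count (config n p) b < count (config n p) a" using u by (simp add: umax_def)
    thus "count (config n p') b < count (config n p') a" using cb[OF \<open>b \<noteq> a\<close>] ca by linarith
  qed
qed


lemma stage_info:
  assumes u: "umax (config n p) a" and st: "stageP (config n p) a" and nf: "\<not> final (config n p)"
  shows "\<exists>w. w \<noteq> 0 \<and> config n p = Mk (n - count (config n p) a + 1) a w"
    and "n - count (config n p) a + 1 < m"
    and "card {i. i < n \<and> p i \<noteq> a} = n - count (config n p) a"
proof -
  obtain w where w: "w \<noteq> 0" "config n p = Mk (n - count (config n p) a + 1) a w"
    using st by (auto simp: stageP_def)
  thus "\<exists>w. w \<noteq> 0 \<and> config n p = Mk (n - count (config n p) a + 1) a w" by blast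
  show "n - count (config n p) a + 1 < m"
  proof (rule ccontr)
    assume "\<not> n - count (config n p) a + 1 < m"
    hence "m \<le> n - count (config n p) a + 1" by simp
    hence "config n p = Mk m a w" using w Mk_ge[of _ a w] by metis
    with nf w show False by (auto simp: final_def)
  qed
  show "card {i. i < n \<and> p i \<noteq> a} = n - count (config n p) a"
    using card_split[of p a] by (simp add: count_config)
qed

definition kw :: "nat \<Rightarrow> nat" where "kw j = (if j = 0 then 4 ^ (n + 1) else 4 ^ j)"

definition Vp :: "(nat \<Rightarrow> nat) \<Rightarrow> complex \<Rightarrow> (nat \<Rightarrow> complex) \<Rightarrow> int" where
  "Vp idf a p = int (\<Sum>i\<in>{i. i < n \<and> p i \<noteq> a}. kw (idf i))
     - (if stageP (config n p) a then 2 * 4 ^ card {i. i < n \<and> p i \<noteq> a} else 0)"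

lemma Vp_le: "Vp idf a p \<le> int (\<Sum>i\<in>{i. i < n \<and> p i \<noteq> a}. kw (idf i))"
  by (simp add: Vp_def)

lemma kw_big1: assumes "k < n" "j = 0 \<or> k < j" shows "4 ^ (k + 1) \<le> kw j"
proof (cases "j = 0")
  case True thus ?thesis using power_increasing[of "k+1" "n+1" "4::nat"] assms by (simp add: kw_def)
next
  case False thus ?thesis using power_increasing[of "k+1" j "4::nat"] assms by (simp add: kw_def)
qed

lemma kw_big2: assumes "k + 1 < n" "j = 0 \<or> k + 2 \<le> j" shows "4 ^ (k + 2) \<le> kw j"
proof (cases "j = 0")
  case True thus ?thesis using power_increasing[of "k+2" "n+1" "4::nat"] assms by (simp add: kw_def)
next
  case False thus ?thesis using power_increasing[of "k+2" j "4::nat"] assms by (simp add: kw_def)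
qed

lemma sum_remove_nat:
  assumes "finite Ob" "i0 \<in> Ob"
  shows "(\<Sum>i\<in>Ob. f i) = f i0 + (\<Sum>i\<in>Ob - {i0}. (f i::nat))"
  using assms by (simp add: sum.remove)

lemma step_stage:
  assumes idinj: "inj_on idf {..<n}"
    and u: "umax (config n p) a" and st: "stageP (config n p) a" and nf: "\<not> final (config n p)"
    and nf': "\<not> final (config n p')"
    and mv: "\<forall>i<n. p' i = p i \<or> spec (idf i) (config n p) (p i) (p' i)"
  shows "umax (config n p') a \<and> ((\<forall>i<n. p' i = p i) \<or> Vp idf a p' < Vp idf a p)"
proof -
  define P where "P = config n p"
  define k where "k = n - count P a"
  obtain w0 where w0: "w0 \<noteq> 0" "P = Mk (k + 1) a w0"
    using stage_info(1)[OF u st nf] by (auto simp: P_def k_def)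
  have km: "k + 1 < m" using stage_info(2)[OF u st nf] by (simp add: P_def k_def)
  have cardO: "card {i. i < n \<and> p i \<noteq> a} = k" using stage_info(3)[OF u st nf] by (simp add: P_def k_def)
  have cPa: "count P a = n - k" using Mk_cntA[of "k+1" w0 a] w0 km mn by simp
  define Ob where "Ob = {i. i < n \<and> p i \<noteq> a}"
  define Ob' where "Ob' = {i. i < n \<and> p' i \<noteq> a}"
  define S where "S X = (\<Sum>i\<in>X. kw (idf i))" for X
  have finO: "finite Ob" "finite Ob'" by (auto simp: Ob_def Ob'_def)
  have V: "Vp idf a p = int (S Ob) - 2 * 4 ^ k" using st cardO by (simp add: Vp_def S_def Ob_def P_def)
  have V'le: "Vp idf a p' \<le> int (S Ob')" using Vp_le by (simp add: S_def Ob'_def)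
  have mvs: "p' i = p i \<or> (p i \<noteq> a \<and> \<not> (1 \<le> idf i \<and> idf i \<le> k) \<and> p' i = a)
      \<or> (p i = a \<and> idf i = k + 1 \<and> (\<exists>w. w \<noteq> 0 \<and> P = Mk (k + 1) a w \<and> p' i = a + w * z (k + 1)))"
    if "i < n" for i
  proof -
    have "p' i = p i \<or> spec (idf i) P (p i) (p' i)" using mv that by (simp add: P_def)
    moreover have "spec (idf i) P (p i) (p' i) \<longleftrightarrow>
        (if p i = a \<and> idf i = k + 1 then (\<exists>w. w \<noteq> 0 \<and> P = Mk (k + 1) a w \<and> p' i = a + w * z (idf i))
         else if p i \<noteq> a \<and> \<not> (1 \<le> idf i \<and> idf i \<le> k) then p' i = a else p' i = p i)"
      using spec_umax[OF u[folded P_def]] st unfolding k_def[symmetric] P_def[symmetric] by simp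
    ultimately show ?thesis by (auto split: if_splits)
  qed
  have zk: "z (k + 1) \<noteq> 0" using znz km by simp
  show ?thesis
  proof (cases "\<exists>r<n. p r = a \<and> p' r \<noteq> p r")
    case False
    have mv2: "\<forall>i<n. p' i = p i \<or> p' i = a"
    proof (intro allI impI)
      fix i assume "i < n"
      thus "p' i = p i \<or> p' i = a" using mvs[of i] False by auto
    qed
    have um: "umax (config n p') a" by (rule step_nonstage[OF u mv2])
    have sub: "Ob' \<subseteq> Ob" using mv2 by (auto simp: Ob_def Ob'_def)
    show ?thesis
    proof (cases "Ob' = Ob")
      case True
      have "\<forall>i<n. p' i = p i"
      proof (intro allI impI)
        fix i assume i: "i < n"
        show "p' i = p i"
        proof (cases "p i = a")
          case True thus ?thesis using mv2 i by auto
        next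
          case F: False
          hence "i \<in> Ob'" using True i by (simp add: Ob_def)
          hence "p' i \<noteq> a" by (simp add: Ob'_def)
          thus ?thesis using mv2 i by auto
        qed
      qed
      thus ?thesis using um by blast
    next
      case False
      then obtain i0 where i0: "i0 \<in> Ob" "i0 \<notin> Ob'" using sub by blast
      have i0n: "i0 < n" "p i0 \<noteq> a" "p' i0 = a" using i0 by (auto simp: Ob_def Ob'_def)
      have bad: "\<not> (1 \<le> idf i0 \<and> idf i0 \<le> k)" using mvs[OF i0n(1)] i0n by auto
      have kn: "k < n" using km mn by simp
      have big: "4 ^ (k + 1) \<le> kw (idf i0)" using kw_big1[OF kn] bad by auto
      have "S Ob' \<le> S (Ob - {i0})" unfolding S_def using sub i0 finO by (intro sum_mono2) auto
      moreover have "S Ob = kw (idf i0) + S (Ob - {i0})" unfolding S_def using sum_remove_nat[OF finO(1) i0(1)] .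
      ultimately have "S Ob' + 4 ^ (k + 1) \<le> S Ob" using big by linarith
      hence "int (S Ob' + 4 ^ (k + 1)) \<le> int (S Ob)" by (simp only: of_nat_le_iff)
      hence "int (S Ob') + 4 ^ (k + 1) \<le> int (S Ob)" by simp
      moreover have "(2::int) * 4 ^ k < 4 ^ (k + 1)" by simp
      ultimately have "Vp idf a p' < Vp idf a p" using V V'le by linarith
      thus ?thesis using um by blast
    qed
  next
    case True
    then obtain r where r: "r < n" "p r = a" "p' r \<noteq> p r" by blast
    obtain w where w: "w \<noteq> 0" "P = Mk (k + 1) a w" "p' r = a + w * z (k + 1)" and idr: "idf r = k + 1"
      using mvs[OF r(1)] r by auto
    have others: "p' i = p i \<or> (p i \<noteq> a \<and> \<not> (1 \<le> idf i \<and> idf i \<le> k) \<and> p' i = a)" if "i < n" "i \<noteq> r" for i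
    proof -
      have "idf i \<noteq> idf r" using idinj that r(1) by (auto dest: inj_onD)
      thus ?thesis using mvs[OF that(1)] idr by auto
    qed
    define p'' where "p'' = p(r := p' r)"
    have kn1: "k + 1 < n" using km mn by simp
    have cfg'': "config n p'' = Mk (k + 2) a w"
    proof -
      have "config n p'' = config n p - {#p r#} + {#p' r#}"
        unfolding config_def p''_def by (rule mset_map_upt_update[OF r(1)])
      also have "\<dots> = Mk (k + 1) a w - {#a#} + {#a + w * z (k + 1)#}" using w r P_def by simp
      also have "\<dots> = Mk (Suc (k + 1)) a w" using Mk_update[OF kn1] by simp
      finally show ?thesis by simp
    qed
    have ya: "p' r \<noteq> a" using w zk by simp
    have c2a0: "count (Mk (k+2) a w) a = n - (k+2) + 1" by (rule Mk_cntA) (use km w in auto)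
    have kk: "n - (k+2) + 1 = n - k - 1" using km mn by linarith
    have c2a: "count (config n p'') a = n - k - 1" unfolding cfg'' c2a0 kk ..
    have c2b: "count (config n p'') b \<le> n - m + 1" if "b \<noteq> a" for b
      using Mk_cntB[OF that w(1), of "k+2"] cfg'' by simp
    have subA: "{i. i < n \<and> p'' i = a} \<subseteq> {i. i < n \<and> p' i = a}"
    proof
      fix i assume "i \<in> {i. i < n \<and> p'' i = a}"
      hence i: "i < n" "p'' i = a" by auto
      show "i \<in> {i. i < n \<and> p' i = a}"
      proof (cases "i = r")
        case True thus ?thesis using i ya by (simp add: p''_def)
      next
        case False thus ?thesis using i others[of i] by (auto simp: p''_def)
      qed
    qed
    have subB: "{i. i < n \<and> p' i = b} \<subseteq> {i. i < n \<and> p'' i = b}" if "b \<noteq> a" for b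
    proof
      fix i assume "i \<in> {i. i < n \<and> p' i = b}"
      hence i: "i < n" "p' i = b" by auto
      show "i \<in> {i. i < n \<and> p'' i = b}"
      proof (cases "i = r")
        case True thus ?thesis using i by (simp add: p''_def)
      next
        case False thus ?thesis using i others[of i] that by (auto simp: p''_def)
      qed
    qed
    have ca: "n - k - 1 \<le> count (config n p') a"
      unfolding c2a[symmetric] count_config by (rule card_mono[OF _ subA]) simp
    have cb: "count (config n p') b \<le> n - m + 1" if "b \<noteq> a" for b
    proof -
      have "count (config n p') b \<le> count (config n p'') b"
        unfolding count_config by (rule card_mono[OF _ subB[OF that]]) simp
      thus ?thesis using c2b[OF that] by simp
    qed
    have gt: "n - m + 1 < count (config n p') a"
    proof (cases "k + 2 < m")
      case True thus ?thesis using ca mn by linarith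
    next
      case False
      hence km2: "k + 2 = m" using km by simp
      show ?thesis
      proof (rule ccontr)
        assume "\<not> n - m + 1 < count (config n p') a"
        hence eqc: "card {i. i < n \<and> p' i = a} = card {i. i < n \<and> p'' i = a}"
          using ca c2a km2 mn unfolding count_config by linarith
        have eqs: "{i. i < n \<and> p'' i = a} = {i. i < n \<and> p' i = a}"
          by (rule card_subset_eq[OF _ subA]) (use eqc in auto)
        have "\<forall>i<n. p' i = p'' i"
        proof (intro allI impI)
          fix i assume i: "i < n"
          show "p' i = p'' i"
          proof (cases "i = r")
            case True thus ?thesis by (simp add: p''_def)
          next
            case F: False
            show ?thesis
            proof (cases "p'' i = a")
              case True thus ?thesis using eqs i by blast
            next
              case False
              hence "p' i \<noteq> a" using eqs i by blast
              thus ?thesis using others[OF i F] F by (auto simp: p''_def)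
            qed
          qed
        qed
        hence "config n p' = config n p''" by (intro config_cong) auto
        hence "config n p' = Mk m a w" using cfg'' km2 by simp
        with nf' w(1) show False by (auto simp: final_def)
      qed
    qed
    have um: "umax (config n p') a" unfolding umax_def
    proof (intro conjI allI impI)
      show "a \<in># config n p'" using gt by (simp flip: count_greater_zero_iff)
      fix b assume "b \<noteq> a" thus "count (config n p') b < count (config n p') a" using cb gt by fastforce
    qed
    have rO: "r \<notin> Ob" using r by (simp add: Ob_def)
    have rO': "r \<in> Ob'" using r ya by (simp add: Ob'_def)
    have sub: "Ob' \<subseteq> insert r Ob"
    proof
      fix i assume "i \<in> Ob'"
      hence i: "i < n" "p' i \<noteq> a" by (auto simp: Ob'_def)
      show "i \<in> insert r Ob"
      proof (cases "i = r")
        case False thus ?thesis using others[OF i(1) False] i by (auto simp: Ob_def)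
      qed simp
    qed
    have kwr: "kw (idf r) = 4 ^ (k + 1)" using idr by (simp add: kw_def)
    have SrO: "S (insert r Ob) = 4 ^ (k + 1) + S Ob" unfolding S_def using rO finO kwr by simp
    show ?thesis
    proof (cases "Ob' = insert r Ob")
      case True
      have same: "\<forall>i<n. i \<noteq> r \<longrightarrow> p' i = p i"
      proof (intro allI impI)
        fix i assume i: "i < n" "i \<noteq> r"
        show "p' i = p i"
        proof (rule ccontr)
          assume "p' i \<noteq> p i"
          hence "p i \<noteq> a" "p' i = a" using others[OF i] by auto
          hence "i \<in> Ob" "i \<notin> Ob'" using i by (auto simp: Ob_def Ob'_def)
          with True show False by blast
        qed
      qed
      hence "config n p' = config n p''" by (intro config_cong) (auto simp: p''_def)
      hence cfg': "config n p' = Mk (k + 2) a w" using cfg'' by simp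
      have cnt': "count (config n p') a = n - k - 1" using c2a cfg' cfg'' by simp
      have st': "stageP (config n p') a"
        unfolding stageP_def using cfg' cnt' w(1) kn1 by (intro exI[of _ w]) simp
      have cOb: "card Ob = k" using cardO unfolding Ob_def .
      have cardO': "card Ob' = k + 1" unfolding True using rO finO(1) cOb by simp
      have "Vp idf a p' = int (S Ob') - 2 * 4 ^ (k + 1)"
        using st' cardO' by (simp add: Vp_def S_def Ob'_def)
      also have "\<dots> = int (S Ob) + 4 ^ (k + 1) - 2 * 4 ^ (k + 1)" using True SrO by simp
      also have "\<dots> < Vp idf a p" using V by simp
      finally show ?thesis using um by blast
    next
      case False
      then obtain i0 where i0: "i0 \<in> Ob" "i0 \<notin> Ob'" using sub rO' by blast
      have i0n: "i0 < n" "p i0 \<noteq> a" "p' i0 = a" using i0 by (auto simp: Ob_def Ob'_def)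
      have i0r: "i0 \<noteq> r" using i0 rO by blast
      have bad: "\<not> (1 \<le> idf i0 \<and> idf i0 \<le> k)" using others[OF i0n(1) i0r] i0n by auto
      have "idf i0 \<noteq> idf r" using idinj i0n(1) r(1) i0r by (auto dest: inj_onD)
      hence bad2: "idf i0 = 0 \<or> k + 2 \<le> idf i0" using bad idr by auto
      have big: "4 ^ (k + 2) \<le> kw (idf i0)" using kw_big2[OF kn1 bad2] .
      have "S Ob' \<le> S (insert r (Ob - {i0}))" unfolding S_def using sub i0 finO by (intro sum_mono2) auto
      also have "\<dots> = 4 ^ (k + 1) + S (Ob - {i0})" unfolding S_def using rO finO kwr by simp
      finally have "S Ob' \<le> 4 ^ (k + 1) + S (Ob - {i0})" .
      moreover have "S Ob = kw (idf i0) + S (Ob - {i0})" unfolding S_def using sum_remove_nat[OF finO(1) i0(1)] .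
      ultimately have "S Ob' + 4 ^ (k + 2) \<le> S Ob + 4 ^ (k + 1)" using big by linarith
      hence "int (S Ob' + 4 ^ (k + 2)) \<le> int (S Ob + 4 ^ (k + 1))" by (simp only: of_nat_le_iff)
      hence "int (S Ob') + 4 ^ (k + 2) \<le> int (S Ob) + 4 ^ (k + 1)" by simp
      moreover have "(4::int) ^ (k + 1) + 2 * 4 ^ k < 4 ^ (k + 2)" by simp
      ultimately have "Vp idf a p' < Vp idf a p" using V V'le by linarith
      thus ?thesis using um by blast
    qed
  qed
qed

lemma step_umax:
  assumes idinj: "inj_on idf {..<n}"
    and u: "umax (config n p) a" and nf: "\<not> final (config n p)"
    and nf': "\<not> final (config n p')"
    and mv: "\<forall>i<n. p' i = p i \<or> spec (idf i) (config n p) (p i) (p' i)"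
  shows "umax (config n p') a \<and> ((\<forall>i<n. p' i = p i) \<or> Vp idf a p' < Vp idf a p)"
proof (cases "stageP (config n p) a")
  case True
  show ?thesis by (rule step_stage[OF idinj u True nf nf' mv])
next
  case nst: False
  have mv2: "\<forall>i<n. p' i = p i \<or> p' i = a"
    using mv spec_umax[OF u] nst by auto
  have um: "umax (config n p') a" by (rule step_nonstage[OF u mv2])
  define Ob where "Ob = {i. i < n \<and> p i \<noteq> a}"
  define Ob' where "Ob' = {i. i < n \<and> p' i \<noteq> a}"
  define S where "S X = (\<Sum>i\<in>X. kw (idf i))" for X
  have finO: "finite Ob" "finite Ob'" by (auto simp: Ob_def Ob'_def)
  have V: "Vp idf a p = int (S Ob)" using nst by (simp add: Vp_def S_def Ob_def)
  have V'le: "Vp idf a p' \<le> int (S Ob')" using Vp_le by (simp add: S_def Ob'_def)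
  have sub: "Ob' \<subseteq> Ob" using mv2 by (auto simp: Ob_def Ob'_def)
  show ?thesis
  proof (cases "Ob' = Ob")
    case True
    have "\<forall>i<n. p' i = p i"
    proof (intro allI impI)
      fix i assume i: "i < n"
      show "p' i = p i"
      proof (cases "p i = a")
        case True thus ?thesis using mv2 i by auto
      next
        case F: False
        hence "i \<in> Ob'" using True i by (simp add: Ob_def)
        hence "p' i \<noteq> a" by (simp add: Ob'_def)
        thus ?thesis using mv2 i by auto
      qed
    qed
    thus ?thesis using um by blast
  next
    case False
    then obtain i0 where i0: "i0 \<in> Ob" "i0 \<notin> Ob'" using sub by blast
    have pos: "0 < kw (idf i0)" by (simp add: kw_def)
    have "S Ob' \<le> S (Ob - {i0})" unfolding S_def using sub i0 finO by (intro sum_mono2) auto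
    moreover have "S Ob = kw (idf i0) + S (Ob - {i0})" unfolding S_def using sum_remove_nat[OF finO(1) i0(1)] .
    ultimately have "S Ob' < S Ob" using pos by linarith
    hence "int (S Ob') < int (S Ob)" by simp
    hence "Vp idf a p' < Vp idf a p" using V V'le by linarith
    thus ?thesis using um by blast
  qed
qed

lemma all_at_stage:
  assumes "\<forall>i<n. p i = a"
  shows "stageP (config n p) a"
proof -
  have cfg: "config n p = Mk 1 a 1"
    unfolding config_def Mk_def using assms by (intro arg_cong[where f=mset] map_cong) (auto simp: gk_def)
  have "count (config n p) a = n" unfolding cfg using Mk_cntA[of 1 1 a] m1 n1 by simp
  thus ?thesis unfolding stageP_def using cfg by (intro exI[of _ 1]) simp
qed

lemma enabled:
  assumes surj: "\<forall>j<n. \<exists>i<n. idf i = j"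
    and u: "umax (config n p) a" and nf: "\<not> final (config n p)"
  shows "\<exists>r<n. \<forall>y. spec (idf r) (config n p) (p r) y \<longrightarrow> y \<noteq> p r"
proof (cases "stageP (config n p) a")
  case st: True
  define k where "k = n - count (config n p) a"
  have km: "k + 1 < m" using stage_info(2)[OF u st nf] by (simp add: k_def)
  have sp: "\<And>j x y. spec j (config n p) x y \<longleftrightarrow>
        (if x = a \<and> j = k + 1 then (\<exists>w. w \<noteq> 0 \<and> config n p = Mk (k + 1) a w \<and> y = a + w * z j)
         else if x \<noteq> a \<and> \<not> (1 \<le> j \<and> j \<le> k) then y = a else y = x)"
    using spec_umax[OF u] st unfolding k_def[symmetric] by simp
  show ?thesis
  proof (cases "\<exists>i<n. p i \<noteq> a \<and> \<not> (1 \<le> idf i \<and> idf i \<le> k)")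
    case True
    then obtain i where i: "i < n" "p i \<noteq> a" "\<not> (1 \<le> idf i \<and> idf i \<le> k)" by blast
    show ?thesis using i sp by (intro exI[of _ i]) auto
  next
    case False
    obtain r where r: "r < n" "idf r = k + 1" using surj km mn by (metis less_le_trans)
    have pr: "p r = a" using False r by fastforce
    have zk: "z (k + 1) \<noteq> 0" using znz km by simp
    show ?thesis using r pr zk sp by (intro exI[of _ r]) auto
  qed
next
  case nst: False
  have "\<exists>i<n. p i \<noteq> a" using all_at_stage nst by blast
  then obtain i where i: "i < n" "p i \<noteq> a" by blast
  show ?thesis using i spec_umax[OF u] nst by (intro exI[of _ i]) auto
qed

lemma tie_n: assumes "\<not> (\<exists>a. umax (config n p) a)" shows "1 < n"
proof (rule ccontr)
  assume "\<not> 1 < n"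
  hence "n = 1" using n1 by simp
  hence "config n p = {#p 0#}" by (simp add: config_def)
  hence "umax (config n p) (p 0)" by (simp add: umax_def)
  with assms show False by blast
qed

lemma tie_enabled:
  assumes surj: "\<forall>j<n. \<exists>i<n. idf i = j" and nu: "\<not> (\<exists>a. umax (config n p) a)"
  shows "\<exists>r<n. \<forall>y. spec (idf r) (config n p) (p r) y \<longrightarrow> y \<noteq> p r"
proof -
  obtain r where r: "r < n" "idf r = 1" using surj tie_n[OF nu] by blast
  show ?thesis using r spec_tie[OF nu] by (intro exI[of _ r]) auto
qed

lemma tie_step:
  assumes idinj: "inj_on idf {..<n}" and nu: "\<not> (\<exists>a. umax (config n p) a)"
    and mv: "\<forall>i<n. p' i = p i \<or> spec (idf i) (config n p) (p i) (p' i)"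
  shows "(\<forall>i<n. p' i = p i) \<or> (\<exists>a. umax (config n p') a)"
proof (cases "\<forall>i<n. p' i = p i")
  case False
  then obtain r where r: "r < n" "p' r \<noteq> p r" by blast
  have sp: "spec (idf r) (config n p) (p r) (p' r)" using mv r by auto
  have r1: "idf r = 1" using sp spec_tie[OF nu] r by (auto split: if_splits)
  have ymax: "\<forall>b. count (config n p) b \<le> count (config n p) (p' r)"
    using sp spec_tie[OF nu] r1 by simp
  have oth: "p' i = p i" if "i < n" "i \<noteq> r" for i
  proof -
    have "idf i \<noteq> idf r" using idinj that r by (auto dest: inj_onD)
    hence "idf i \<noteq> 1" using r1 by simp
    thus ?thesis using mv that spec_tie[OF nu] by auto
  qed
  have "config n p' = config n (p(r := p' r))" by (intro config_cong) (auto simp: oth)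
  also have "\<dots> = config n p - {#p r#} + {#p' r#}"
    unfolding config_def by (rule mset_map_upt_update[OF r(1)])
  finally have cfg: "config n p' = config n p - {#p r#} + {#p' r#}" .
  have "umax (config n p') (p' r)" unfolding umax_def cfg
  proof (intro conjI allI impI)
    show "p' r \<in># config n p - {#p r#} + {#p' r#}" by simp
    fix b assume "b \<noteq> p' r"
    thus "count (config n p - {#p r#} + {#p' r#}) b < count (config n p - {#p r#} + {#p' r#}) (p' r)"
      using ymax[rule_format, of b] r(2) by auto
  qed
  thus ?thesis by blast
qed simp

lemma Vp_cong: "(\<And>i. i < n \<Longrightarrow> p i = q i) \<Longrightarrow> Vp idf a p = Vp idf a q"
proof -
  assume h: "\<And>i. i < n \<Longrightarrow> p i = q i"
  have "config n p = config n q" by (rule config_cong) (use h in auto)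
  moreover have "{i. i < n \<and> p i \<noteq> a} = {i. i < n \<and> q i \<noteq> a}" using h by auto
  ultimately show ?thesis by (simp add: Vp_def)
qed

lemma Vp_lower: "- (2 * 4 ^ n) \<le> Vp idf a p"
proof -
  have "card {i. i < n \<and> p i \<noteq> a} \<le> n"
    using card_mono[of "{..<n}" "{i. i < n \<and> p i \<noteq> a}"] by auto
  hence "(4::int) ^ card {i. i < n \<and> p i \<noteq> a} \<le> 4 ^ n" by (intro power_increasing) auto
  hence pow: "2 * (4::int) ^ card {i. i < n \<and> p i \<noteq> a} \<le> 2 * 4 ^ n" by simp
  have p0: "(0::int) \<le> 4 ^ n" by simp
  have s0: "0 \<le> int (\<Sum>i\<in>{i. i < n \<and> p i \<noteq> a}. kw (idf i))" by (rule of_nat_0_le_iff)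
  show ?thesis
  proof (cases "stageP (config n p) a")
    case True show ?thesis unfolding Vp_def if_P[OF True] using s0 pow p0 by linarith
  next
    case False show ?thesis unfolding Vp_def if_not_P[OF False] using s0 pow p0 by linarith
  qed
qed

lemma exec_correct:
  fixes A :: "nat \<Rightarrow> target_fun" and c :: "nat \<Rightarrow> complex"
  assumes idinj: "inj_on idf {..<n}" and surj: "\<forall>j<n. \<exists>i<n. idf i = j"
    and Aid: "\<forall>i<n. A i = fj (idf i)" and cnz: "\<forall>i<n. c i \<noteq> 0" and fr: "fair n S"
  shows "\<exists>t. final (config n (exec n A c p0 S t))"
proof (rule ccontr)
  assume nf0: "\<not> (\<exists>t. final (config n (exec n A c p0 S t)))"
  define p where "p t = exec n A c p0 S t" for t
  have nf: "\<And>t. \<not> final (config n (p t))" using nf0 by (simp add: p_def)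
  have cne: "\<And>t. config n (p t) \<noteq> {#}" using n1 by (cases n) (auto simp: config_def)
  have act: "spec (idf i) (config n (p t)) (p t i) (p (Suc t) i)" if "i < n" "i \<in> S t" for i t
  proof -
    have "p (Suc t) i = p t i + c i * fj (idf i) (image_mset (\<lambda>q. (q - p t i) / c i) (config n (p t)))"
      using that Aid by (simp add: p_def Let_def observe_def)
    thus ?thesis using local_global[OF _ cne, of "c i"] cnz that by simp
  qed
  have nact: "p (Suc t) i = p t i" if "i \<notin> S t" for i t
    using that by (simp add: p_def Let_def)
  have mv: "\<forall>i<n. p (Suc t) i = p t i \<or> spec (idf i) (config n (p t)) (p t i) (p (Suc t) i)" for t
    using act nact by blast
  define unch where "unch t \<longleftrightarrow> (\<forall>i<n. p (Suc t) i = p t i)" for t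
  have stay: "\<forall>i<n. p (t + d) i = p t i" if "\<forall>s<d. unch (t + s)" for t d
    using that
  proof (induction d)
    case 0 then show ?case by simp
  next
    case (Suc d)
    hence "\<forall>i<n. p (t + d) i = p t i" by auto
    moreover have "unch (t + d)" using Suc.prems by auto
    ultimately show ?case by (simp add: unch_def)
  qed
  have cfg_eq: "config n (p s) = config n (p t)" if "\<forall>i<n. p s i = p t i" for s t
    by (rule config_cong) (use that in auto)
  have progress: "\<exists>s\<ge>t. \<not> unch s"
    if en: "r < n" "\<forall>y. spec (idf r) (config n (p t)) (p t r) y \<longrightarrow> y \<noteq> p t r" for r t
  proof (rule ccontr)
    assume "\<not> (\<exists>s\<ge>t. \<not> unch s)"
    hence all: "\<And>s. s \<ge> t \<Longrightarrow> unch s" by blast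
    obtain t' where t': "t' \<ge> t" "r \<in> S t'" using fr en(1) unfolding fair_def by blast
    have eq: "\<forall>i<n. p t' i = p t i" using stay[of "t'-t" t] all t' by simp
    have "spec (idf r) (config n (p t')) (p t' r) (p (Suc t') r)" using act en(1) t' by blast
    hence "spec (idf r) (config n (p t)) (p t r) (p (Suc t') r)" using eq en(1) cfg_eq[OF eq] by simp
    hence "p (Suc t') r \<noteq> p t r" using en by blast
    moreover have "p (Suc t') r = p t' r" using all[OF t'(1)] en(1) by (simp add: unch_def)
    ultimately show False using eq en(1) by simp
  qed
  have first_change: "\<exists>s\<ge>t. \<not> unch s \<and> (\<forall>i<n. p s i = p t i)" if "\<exists>s\<ge>t. \<not> unch s" for t
  proof -
    define s where "s = (LEAST s. t \<le> s \<and> \<not> unch s)"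
    have s: "t \<le> s" "\<not> unch s" using LeastI_ex[OF that[unfolded Bex_def]] by (auto simp: s_def)
    have "\<forall>x<s - t. unch (t + x)"
    proof (intro allI impI)
      fix x assume "x < s - t"
      hence "t + x < s" by simp
      hence "\<not> (t \<le> t + x \<and> \<not> unch (t + x))" unfolding s_def by (rule not_less_Least)
      thus "unch (t + x)" by simp
    qed
    hence "\<forall>i<n. p s i = p t i" using stay[of "s - t" t] s(1) by simp
    thus ?thesis using s by blast
  qed
  have ph1: "\<exists>t a. umax (config n (p t)) a"
  proof (rule ccontr)
    assume H: "\<not> (\<exists>t a. umax (config n (p t)) a)"
    have "\<forall>t. unch t" using tie_step[OF idinj _ mv] H by (auto simp: unch_def)
    moreover obtain r where "r < n" "\<forall>y. spec (idf r) (config n (p 0)) (p 0 r) y \<longrightarrow> y \<noteq> p 0 r"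
      using tie_enabled[OF surj] H by blast
    ultimately show False using progress by blast
  qed
  then obtain t0 a where t0: "umax (config n (p t0)) a" by blast
  have um: "umax (config n (p t)) a" if "t \<ge> t0" for t
    using that
  proof (induction t rule: dec_induct)
    case base then show ?case using t0 .
  next
    case (step t) then show ?case using step_umax[OF idinj _ nf nf mv] by blast
  qed
  have main: "\<forall>t\<ge>t0. nat (Vp idf a (p t) + 2 * 4 ^ n) \<noteq> v" for v
  proof (induction v rule: less_induct)
    case (less v)
    show ?case
    proof (intro allI impI)
      fix t assume tt: "t \<ge> t0"
      show "nat (Vp idf a (p t) + 2 * 4 ^ n) \<noteq> v"
      proof
        assume vt: "nat (Vp idf a (p t) + 2 * 4 ^ n) = v"
        obtain r where "r < n" "\<forall>y. spec (idf r) (config n (p t)) (p t r) y \<longrightarrow> y \<noteq> p t r"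
          using enabled[OF surj um[OF tt] nf] by blast
        then obtain s where s: "s \<ge> t" "\<not> unch s" "\<forall>i<n. p s i = p t i"
          using first_change progress by blast
        have "Vp idf a (p (Suc s)) < Vp idf a (p s)"
          using step_umax[OF idinj um[of s] nf nf mv] s tt by (auto simp: unch_def)
        moreover have "Vp idf a (p s) = Vp idf a (p t)" by (rule Vp_cong) (use s in auto)
        ultimately have "nat (Vp idf a (p (Suc s)) + 2 * 4 ^ n) < v"
          using vt Vp_lower[of idf a "p (Suc s)"] by linarith
        hence "\<forall>t\<ge>t0. nat (Vp idf a (p t) + 2 * 4 ^ n) \<noteq> nat (Vp idf a (p (Suc s)) + 2 * 4 ^ n)"
          by (rule less.IH)
        moreover have "Suc s \<ge> t0" using s(1) tt by simp
        ultimately show False by blast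
      qed
    qed
  qed
  show False using main[of "nat (Vp idf a (p t0) + 2 * 4 ^ n)", rule_format, OF order_refl] by simp
qed

lemma final_similar:
  assumes f: "final P" and G: "G = mset (map (\<lambda>i. g0 + z i) [0..<n])"
  shows "similar P G"
proof -
  obtain a w where aw: "w \<noteq> 0" "P = Mk m a w" using f by (auto simp: final_def)
  have "Mk m a w = mset (map (\<lambda>i. a + w * z i) [0..<n])"
    unfolding Mk_def by (intro arg_cong[where f=mset] map_cong) (auto simp: gk_def zz z0 Suc_le_eq)
  also have "\<dots> = image_mset (\<lambda>g. w * g + (a - w * g0)) G"
    unfolding G mset_map[symmetric] map_map by (intro arg_cong[where f=mset] map_cong) (auto simp: algebra_simps)
  finally show ?thesis unfolding similar_def using aw by blast
qed

definition PhiA :: "target_fun set" where "PhiA = fj ` {..<n}"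

lemma fj_inj: "inj fj"
proof (rule injI)
  fix i j assume "fj i = fj j"
  hence "fj i {#} = fj j {#}" by simp
  thus "i = j" by (simp add: fj_def)
qed

lemma PhiA_card: "card PhiA = n"
  unfolding PhiA_def using card_image[OF inj_on_subset[OF fj_inj]] by simp

lemma PhiA_alg: "algorithm n PhiA"
  unfolding algorithm_def using PhiA_card n1 by (auto simp: PhiA_def)

lemma PhiA_solves:
  assumes G: "G = mset (map (\<lambda>i. g0 + z i) [0..<n])"
  shows "solves_pf n G PhiA"
  unfolding solves_pf_def
proof (intro allI impI)
  fix A :: "nat \<Rightarrow> target_fun" and c :: "nat \<Rightarrow> complex" and p0 S
  assume asg: "assignment n PhiA A" and cnz: "\<forall>i<n. c i \<noteq> 0" and fr: "fair n S"
  have AP: "A ` {..<n} = fj ` {..<n}" using asg by (simp add: assignment_def PhiA_def)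
  define idf where "idf i = inv_into {..<n} fj (A i)" for i
  have Aid: "\<forall>i<n. A i = fj (idf i)"
  proof (intro allI impI)
    fix i assume "i < n"
    hence "A i \<in> fj ` {..<n}" using AP by blast
    thus "A i = fj (idf i)" unfolding idf_def by (rule f_inv_into_f[symmetric])
  qed
  have idr: "\<forall>i<n. idf i < n"
  proof (intro allI impI)
    fix i assume "i < n"
    hence "A i \<in> fj ` {..<n}" using AP by blast
    hence "inv_into {..<n} fj (A i) \<in> {..<n}" by (rule inv_into_into)
    thus "idf i < n" unfolding idf_def by simp
  qed
  have injA: "inj_on A {..<n}"
  proof (rule eq_card_imp_inj_on)
    show "finite {..<n}" by simp
    show "card (A ` {..<n}) = card {..<n}" using AP PhiA_card by (simp add: PhiA_def)
  qed
  have idinj: "inj_on idf {..<n}"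
  proof (rule inj_onI)
    fix i j assume "i \<in> {..<n}" "j \<in> {..<n}" "idf i = idf j"
    hence "A i = A j" using Aid by auto
    thus "i = j" using injA \<open>i \<in> {..<n}\<close> \<open>j \<in> {..<n}\<close> by (auto dest: inj_onD)
  qed
  have surj: "\<forall>j<n. \<exists>i<n. idf i = j"
  proof (intro allI impI)
    fix j assume "j < n"
    hence "fj j \<in> A ` {..<n}" using AP by blast
    then obtain i where i: "i < n" "A i = fj j" by auto
    hence "fj (idf i) = fj j" using Aid by simp
    hence "idf i = j" using fj_inj by (auto dest: injD)
    thus "\<exists>i<n. idf i = j" using i by blast
  qed
  obtain t where "final (config n (exec n A c p0 S t))"
    using exec_correct[OF idinj surj Aid cnz fr] by blast
  thus "\<exists>t. similar (config n (exec n A c p0 S t)) G" using final_similar[OF _ G] by blast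
qed

end

lemma enum_G:
  assumes sz: "size G = n" and n1: "1 \<le> n"
  shows "\<exists>m z g0. pfalg n m z \<and> G = mset (map (\<lambda>i. g0 + z i) [0..<n])"
proof -
  have Gne: "G \<noteq> {#}" using sz n1 by auto
  define M where "M = Max (count G ` set_mset G)"
  have fin: "finite (count G ` set_mset G)" by simp
  have ne: "count G ` set_mset G \<noteq> {}" using Gne by simp
  obtain g0 where g0: "g0 \<in># G" "count G g0 = M" using Max_in[OF fin ne] M_def by auto
  have le: "count G x \<le> count G g0" for x
  proof (cases "x \<in># G")
    case True thus ?thesis using Max_ge[OF fin] M_def g0 by auto
  next
    case False thus ?thesis by (simp add: not_in_iff)
  qed
  define mu where "mu = count G g0"
  have "0 < count G g0" using g0(1) by simp
  hence mu1: "1 \<le> mu" by (simp add: mu_def)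
  define R where "R = filter_mset (\<lambda>x. x \<noteq> g0) G"
  obtain rs where rs: "mset rs = R" using ex_mset by blast
  define gl where "gl = g0 # rs @ replicate (mu - 1) g0"
  have mgl: "mset gl = G"
  proof (rule multiset_eqI)
    fix x
    show "count (mset gl) x = count G x"
    proof (cases "x = g0")
      case True
      have "count R g0 = 0" by (simp add: R_def)
      thus ?thesis using True mu1 rs by (simp add: gl_def mu_def)
    next
      case False thus ?thesis using rs by (simp add: gl_def R_def)
    qed
  qed
  have lgl: "length gl = n" using mgl sz by (metis size_mset)
  have ln: "length gl = 1 + length rs + (mu - 1)" by (simp add: gl_def)
  define m where "m = length rs + 1"
  define z where "z i = (if i < n then gl ! i - g0 else 0)" for i
  have mn: "m \<le> n" using lgl ln by (simp add: m_def)
  have nm: "n - m + 1 = mu" using lgl ln mu1 by (simp add: m_def)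
  have z0: "z 0 = 0" using n1 by (simp add: z_def gl_def)
  have znz: "z i \<noteq> 0" if "1 \<le> i" "i < m" for i
  proof -
    have "i < n" using that mn by simp
    moreover have "gl ! i = rs ! (i - 1)" using that
      by (cases i) (auto simp: gl_def m_def nth_append)
    moreover have "rs ! (i - 1) \<in> set rs" using that by (simp add: m_def)
    hence "rs ! (i - 1) \<noteq> g0" using rs by (auto simp: R_def simp flip: set_mset_mset)
    ultimately show ?thesis by (simp add: z_def)
  qed
  have zz: "z i = 0" if "m \<le> i" for i
  proof (cases "i < n")
    case True
    have "gl ! i = replicate (mu - 1) g0 ! (i - m)" using that True
      by (cases i) (auto simp: gl_def m_def nth_append)
    also have "\<dots> = g0" using that True lgl ln by (simp add: m_def)
    finally show ?thesis using True by (simp add: z_def)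
  qed (simp add: z_def)
  have mapz: "map (\<lambda>i. g0 + z i) [0..<n] = gl"
  proof -
    have "map (\<lambda>i. g0 + z i) [0..<n] = map (\<lambda>i. gl ! i) [0..<length gl]"
      using lgl by (intro map_cong) (auto simp: z_def)
    also have "\<dots> = gl" by (rule map_nth)
    finally show ?thesis .
  qed
  have zmult: "card {i. i < n \<and> z i = \<zeta>} \<le> n - m + 1" for \<zeta>
  proof -
    have "map z [0..<n] = map (\<lambda>g. g - g0) (map (\<lambda>i. g0 + z i) [0..<n])" by simp
    hence "mset (map z [0..<n]) = image_mset (\<lambda>g. g - g0) G"
      using mapz mgl by (metis mset_map)
    hence "card {i. i < n \<and> z i = \<zeta>} = count (image_mset (\<lambda>g. g - g0) G) \<zeta>"
      by (metis count_mset_map_upt)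
    also have "\<dots> = count (image_mset (\<lambda>g. g - g0) G) ((\<lambda>g. g - g0) (\<zeta> + g0))" by simp
    also have "\<dots> = count G (\<zeta> + g0)" by (rule count_image_inj) (auto simp: inj_def)
    also have "\<dots> \<le> mu" using le by (simp add: mu_def)
    finally show ?thesis using nm by simp
  qed
  have "pfalg n m z"
    by unfold_locales (use mn z0 znz zz zmult in \<open>auto simp: m_def\<close>)
  thus ?thesis using mapz mgl by metis
qed

theorem partA:
  assumes "1 \<le> n" "size G = n"
  shows "\<exists>Phi. algorithm n Phi \<and> card Phi = n \<and> solves_pf n G Phi"
proof -
  obtain m z g0 where pf: "pfalg n m z" and G: "G = mset (map (\<lambda>i. g0 + z i) [0..<n])"
    using enum_G[OF assms(2,1)] by blast
  interpret pfalg n m z by (rule pf)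
  show ?thesis using PhiA_alg PhiA_card PhiA_solves[OF G] by blast
qed


theorem theoremT3020:
  fixes n :: nat
  assumes "n \<ge> 1"
  shows "(\<forall>G. size G = n \<longrightarrow> (\<exists>Phi. algorithm n Phi \<and> card Phi = n \<and> solves_pf n G Phi))
       \<and> (n \<ge> 3 \<longrightarrow> (\<forall>G. is_regular_ngon n G \<longrightarrow>
            (\<forall>Phi. algorithm n Phi \<and> card Phi < n \<longrightarrow> \<not> solves_pf n G Phi)))"
  using partA[OF assms] partB by blast

end
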